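(* Let $\overline X,\overline Y$ be independent balanced real random variables with finite second moments, and let $E\in\mathbb{R}$. Then \[ \operatorname{Var}\big|\overline X+\overline Y+E\big| \;\ge\; \frac{1}{4}\max\big\{\operatorname{Var}|\overline X+E|,\ \operatorname{Var}|\overline Y+E|\big\}. \]
   Context: A random variable is balanced if it has expectation $0$. $\operatorname{Var} Z=\mathbb{E}[Z^2]-(\mathbb{E}Z)^2$. *)

theory Defs
  imports "HOL-Probability.Probability"
begin

definition Var :: "'a measure \<Rightarrow> ('a \<Rightarrow> real) \<Rightarrow> real" where
  "Var M Z = (LINT x|M. (Z x)^2) - (LINT x|M. Z x)^2"

end

theory Submission
  imports Defs
begin

lemma g1:
  fixes a d s t :: real
  assumes "\<bar>a - d\<bar> \<le> s"
  shows "(t - d)^2/4 \<le> (t - a)^2 + s^2"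
proof -
  have e: "2*(t-a)^2 + 2*(a-d)^2 - (t - d)^2 = (t - a - (a - d))^2"
    by (simp add: power2_eq_square algebra_simps)
  have "(a-d)^2 \<le> s^2" using assms
    by (metis abs_ge_zero abs_le_square_iff abs_of_nonneg order.trans)
  moreover have "0 \<le> (t - a - (a - d))^2" by simp
  moreover have "0 \<le> (t-a)^2" by simp
  moreover have "0 \<le> s^2" by simp
  ultimately show ?thesis using e by linarith
qed

lemma g2:
  fixes a b d tau :: real
  assumes "0 \<le> a" "0 \<le> b" "0 \<le> d" "0 \<le> tau" "d \<le> a + b"
  shows "(tau - d)^2/4 \<le> (tau + a)^2 + b^2"
proof (cases "tau \<le> d")
  case True
  have "(tau - d)^2 = (d - tau)^2" by (simp add: power2_commute)
  also have "\<dots> \<le> d^2" using True assms by (intro power_mono) auto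
  also have "\<dots> \<le> (a+b)^2" using assms by (intro power_mono) auto
  finally have h1: "(tau - d)^2 \<le> (a+b)^2" .
  have e: "2*a^2 + 2*b^2 - (a+b)^2 = (a-b)^2" by (simp add: power2_eq_square algebra_simps)
  have h3: "a^2 \<le> (tau+a)^2" using assms by (intro power_mono) auto
  have "0 \<le> (a-b)^2" "0 \<le> b^2" "0 \<le> a^2" by simp_all
  then show ?thesis using h1 e h3 by linarith
next
  case False
  have h1: "(tau - d)^2 \<le> tau^2" using False assms by (intro power_mono) auto
  have h2: "tau^2 \<le> (tau+a)^2" using assms by (intro power_mono) auto
  have "0 \<le> b^2" "0 \<le> tau^2" by simp_all
  then show ?thesis using h1 h2 by linarith
qed

lemma lemA:
  fixes u w c t :: real
  assumes u: "0 < u" and uw: "u \<le> w" and c: "0 \<le> c"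
  shows "(\<bar>t\<bar> - max ((w-u)/(u+w)*c) (c - sqrt (u*w)))^2/4
          \<le> (w*(\<bar>t+u\<bar>-c)^2 + u*(\<bar>t-w\<bar>-c)^2)/(u+w)"
proof -
  define L where "L = u + w"
  define s where "s = sqrt (u*w)"
  define k where "k = (w-u)/(u+w)"
  define d where "d = max (k*c) (c - s)"
  define b where "b = s*\<bar>L - 2*c\<bar>/L"
  have w: "0 < w" using u uw by linarith
  have L: "0 < L" using u w by (simp add: L_def)
  have uw0: "0 \<le> u*w" using u w by (simp add: zero_le_mult_iff)
  have s0: "0 \<le> s" using uw0 by (simp add: s_def)
  have s2: "s^2 = u*w" using uw0 by (simp add: s_def)
  have us: "u \<le> s"
  proof -
    have "sqrt (u*u) \<le> sqrt (u*w)" using u uw by (intro real_sqrt_le_mono mult_left_mono) auto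
    then show ?thesis using u by (simp add: s_def)
  qed
  have k0: "0 \<le> k" using uw u by (simp add: k_def)
  have k1: "k \<le> 1" using u w by (simp add: k_def)
  have kc0: "0 \<le> k*c" using k0 c by simp
  have kcc: "k*c \<le> c" using mult_left_le_one_le[OF c k0 k1] .
  have d0: "0 \<le> d" using kc0 by (simp add: d_def)
  have b0: "0 \<le> b" using s0 L by (simp add: b_def)
  have hcd: "\<bar>c - d\<bar> \<le> s" using kcc s0 by (simp add: d_def abs_le_iff)
  have hdk: "d - k*c \<le> b"
  proof (cases "k*c \<le> c - s")
    case True
    have e1: "1 - k = 2*u/L" using u w by (simp add: k_def L_def field_simps)
    have "c - s - k*c = (1-k)*c - s" by (simp add: algebra_simps)
    also have "\<dots> = 2*u*c/L - s" by (simp add: e1)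
    also have "\<dots> \<le> 2 * s * c / L - s"
      using us c L by (intro diff_right_mono divide_right_mono mult_right_mono) auto
    also have "\<dots> = s*(2*c - L)/L" using L by (simp add: field_simps)
    also have "\<dots> \<le> s*\<bar>L - 2*c\<bar>/L"
      using s0 L by (intro divide_right_mono mult_left_mono) auto
    finally show ?thesis using True by (simp add: d_def b_def max_def)
  next
    case False
    then show ?thesis using b0 by (simp add: d_def max_def)
  qed
  have dk0: "k*c \<le> d" by (simp add: d_def)
  have hkd: "\<bar>k*c - d\<bar> \<le> b" using hdk dk0 by (simp add: abs_le_iff)
  have goal: "(\<bar>t\<bar> - d)^2/4 \<le> (w*(\<bar>t+u\<bar>-c)^2 + u*(\<bar>t-w\<bar>-c)^2)/L"
  proof (cases "w \<le> t")
    case True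
    have a1: "\<bar>t+u\<bar> = t+u" "\<bar>t-w\<bar> = t-w" "\<bar>t\<bar> = t" using True u w by auto
    have "w*(t+u-c)^2 + u*(t-w-c)^2 = L*((t-c)^2 + u*w)"
      by (simp add: L_def power2_eq_square algebra_simps)
    then have "(w*(\<bar>t+u\<bar>-c)^2 + u*(\<bar>t-w\<bar>-c)^2)/L = (t-c)^2 + s^2"
      using L by (simp add: a1 s2)
    moreover have "(t - d)^2/4 \<le> (t-c)^2 + s^2" by (rule g1) (rule hcd)
    ultimately show ?thesis by (simp add: a1)
  next
    case False
    note F1 = False
    show ?thesis
    proof (cases "t < -u")
      case True
      have a1: "\<bar>t+u\<bar> = -(t+u)" "\<bar>t-w\<bar> = w-t" "\<bar>t\<bar> = -t" using True u w by auto
      have "w*(-(t+u)-c)^2 + u*(w-t-c)^2 = L*((-t-c)^2 + u*w)"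
        by (simp add: L_def power2_eq_square algebra_simps)
      then have "(w*(\<bar>t+u\<bar>-c)^2 + u*(\<bar>t-w\<bar>-c)^2)/L = (-t-c)^2 + s^2"
        using L by (simp add: a1 s2)
      moreover have "(-t - d)^2/4 \<le> (-t-c)^2 + s^2" by (rule g1) (rule hcd)
      ultimately show ?thesis by (simp add: a1)
    next
      case False
      have a1: "\<bar>t+u\<bar> = t+u" "\<bar>t-w\<bar> = w-t" using False F1 u w by auto
      have id1: "L*(w*(t+u-c)^2 + u*(w-t-c)^2) = (L*t - (w-u)*c)^2 + u*w*(L-2*c)^2"
        by (simp add: L_def power2_eq_square algebra_simps)
      have id2: "(t - k*c)^2 + b^2 = ((L*t - (w-u)*c)^2 + u*w*(L-2*c)^2)/L^2"
      proof -
        have "t - k*c = (L*t - (w-u)*c)/L" using L by (simp add: k_def L_def field_simps)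
        moreover have "b^2 = u*w*(L-2*c)^2/L^2"
          by (simp add: b_def power_mult_distrib power_divide s2)
        ultimately show ?thesis by (simp add: power_divide add_divide_distrib)
      qed
      have eqq: "(w*(\<bar>t+u\<bar>-c)^2 + u*(\<bar>t-w\<bar>-c)^2)/L = (t - k*c)^2 + b^2"
      proof -
        have "(t - k*c)^2 + b^2 = (L*(w*(t+u-c)^2 + u*(w-t-c)^2))/(L*L)"
          unfolding id2 id1[symmetric] by (simp only: power2_eq_square)
        also have "\<dots> = (w*(t+u-c)^2 + u*(w-t-c)^2)/L" using L by simp
        also have "(w-t-c)^2 = (\<bar>t-w\<bar>-c)^2" using a1 by simp
        finally show ?thesis using a1 by simp
      qed
      show ?thesis
      proof (cases "0 \<le> t")
        case True
        have "(t - d)^2/4 \<le> (t - k*c)^2 + b^2" by (rule g1) (rule hkd)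
        then show ?thesis using True eqq by simp
      next
        case False
        have "(-t - d)^2/4 \<le> (-t + k*c)^2 + b^2"
          using kc0 b0 d0 False hdk by (intro g2) auto
        moreover have "(-t + k*c)^2 = (t - k*c)^2" by (simp add: power2_commute)
        ultimately show ?thesis using False eqq by simp
      qed
    qed
  qed
  then show ?thesis by (simp add: L_def d_def k_def s_def)
qed


definition Dd :: "real \<Rightarrow> real \<Rightarrow> real \<Rightarrow> real" where
  "Dd u w c = max (\<bar>w-u\<bar>/(u+w)*c) (c - sqrt (u*w))"

lemma lemA':
  fixes u w c t :: real
  assumes u: "0 < u" and w: "0 < w" and c: "0 \<le> c"
  shows "(\<bar>t\<bar> - Dd u w c)^2/4 \<le> (w*(\<bar>t+u\<bar>-c)^2 + u*(\<bar>t-w\<bar>-c)^2)/(u+w)"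
proof (cases "u \<le> w")
  case True
  then show ?thesis using lemA[OF u True c, of t] by (simp add: Dd_def)
next
  case False
  then have wu: "w \<le> u" by simp
  have "(\<bar>-t\<bar> - max ((u-w)/(w+u)*c) (c - sqrt (w*u)))^2/4
          \<le> (u*(\<bar>-t+w\<bar>-c)^2 + w*(\<bar>-t-u\<bar>-c)^2)/(w+u)"
    by (rule lemA[OF w wu c])
  moreover have "\<bar>-t+w\<bar> = \<bar>t-w\<bar>" "\<bar>-t-u\<bar> = \<bar>t+u\<bar>" by linarith+
  moreover have "\<bar>w-u\<bar> = u - w" using wu by simp
  ultimately show ?thesis by (simp add: Dd_def add.commute mult.commute)
qed

lemma supp:
  fixes F :: "real \<Rightarrow> real" and K :: real
  assumes h0: "K \<le> F 0"
    and h2: "\<And>u w. 0 < u \<Longrightarrow> 0 < w \<Longrightarrow> (u+w)*K \<le> w*F u + u*F (-w)"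
  shows "\<exists>l. \<forall>y. K + l*y \<le> F y"
proof -
  define S where "S = (\<lambda>u. (F u - K)/u) ` {0<..}"
  have Sne: "S \<noteq> {}" by (auto simp: S_def)
  have key: "(K - F (-w))/w \<le> (F u - K)/u" if "0 < u" "0 < w" for u w
  proof -
    have "(u+w)*K \<le> w*F u + u*F (-w)" using h2 that .
    then have "u*(K - F (-w)) \<le> w*(F u - K)" by (simp add: algebra_simps)
    then show ?thesis using that by (simp add: divide_simps mult.commute)
  qed
  have bdd: "bdd_below S"
    unfolding S_def bdd_below_def using key[of _ 1] by auto
  define l where "l = Inf S"
  have "K + l*y \<le> F y" for y
  proof (cases "0 < y")
    case True
    have "l \<le> (F y - K)/y" unfolding l_def using bdd True
      by (intro cInf_lower) (auto simp: S_def)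
    then show ?thesis using True by (simp add: divide_simps mult.commute)
  next
    case False
    show ?thesis
    proof (cases "y = 0")
      case True then show ?thesis using h0 by simp
    next
      case False
      then have y: "0 < -y" using \<open>\<not> 0 < y\<close> by simp
      have "(K - F y)/(-y) \<le> l" unfolding l_def
      proof (rule cInf_greatest[OF Sne])
        fix z assume "z \<in> S"
        then obtain u where u: "0 < u" "z = (F u - K)/u" by (auto simp: S_def)
        show "(K - F y)/(-y) \<le> z" using key[OF u(1) y] u(2) by simp
      qed
      then show ?thesis using y by (simp add: divide_simps mult.commute)
    qed
  qed
  then show ?thesis by blast
qed

lemma var_shift:
  fixes M :: "'a measure" and f :: "'a \<Rightarrow> real"
  assumes P: "prob_space M" and i1: "integrable M f" and i2: "integrable M (\<lambda>x. (f x)^2)"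
  shows "(LINT x|M. (f x - d)^2) = Var M f + ((LINT x|M. f x) - d)^2"
proof -
  interpret prob_space M by (rule P)
  have "(\<lambda>x. (f x - d)^2) = (\<lambda>x. (f x)^2 - 2*d*f x + d^2)"
    by (simp add: fun_eq_iff power2_diff)
  then have "(LINT x|M. (f x - d)^2) = (LINT x|M. (f x)^2) - 2*d*(LINT x|M. f x) + d^2"
    using i1 i2 by (simp add: prob_space)
  then show ?thesis by (simp add: Var_def power2_diff)
qed

lemma abs_mult_le: "\<bar>x*y\<bar> \<le> x^2 + y^2" for x y :: real
proof -
  have "0 \<le> (\<bar>x\<bar> - \<bar>y\<bar>)^2" by simp
  then have "2*\<bar>x*y\<bar> \<le> x^2 + y^2" by (simp add: power2_diff abs_mult)
  moreover have "0 \<le> \<bar>x*y\<bar>" by simp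
  ultimately show ?thesis by linarith
qed

lemma indep_var_sym:
  assumes P: "prob_space M" and ind: "prob_space.indep_var M S X T Y"
  shows "prob_space.indep_var M T Y S X"
proof -
  interpret prob_space M by (rule P)
  define SX where "SX = sigma_sets (space M) { X -` A \<inter> space M | A. A \<in> sets S}"
  define SY where "SY = sigma_sets (space M) { Y -` A \<inter> space M | A. A \<in> sets T}"
  have h: "(random_variable S X \<and> random_variable T Y) \<and> indep_set SX SY"
    using ind unfolding SX_def SY_def by (simp only: indep_var_eq)
  then have I: "indep_set SX SY" by blast
  show ?thesis unfolding indep_var_eq SX_def[symmetric] SY_def[symmetric]
  proof (intro conjI indep_setI)
    show "random_variable T Y" "random_variable S X" using h by auto
    show "SY \<subseteq> events" by (rule indep_setD_ev2[OF I])
    show "SX \<subseteq> events" by (rule indep_setD_ev1[OF I])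
    fix a b assume "a \<in> SY" "b \<in> SX"
    then show "prob (a \<inter> b) = prob a * prob b"
      using indep_setD[OF I \<open>b \<in> SX\<close> \<open>a \<in> SY\<close>] by (simp add: Int_commute mult.commute)
  qed
qed

lemma main:
  fixes M :: "'a measure" and X Y :: "'a \<Rightarrow> real" and E :: real
  assumes P: "prob_space M"
    and Xm[measurable]: "X \<in> borel_measurable M" and Ym[measurable]: "Y \<in> borel_measurable M"
    and ind: "prob_space.indep_var M borel X borel Y"
    and iX: "integrable M X" and iY: "integrable M Y"
    and iX2: "integrable M (\<lambda>x. (X x)^2)" and iY2: "integrable M (\<lambda>x. (Y x)^2)"
    and EY: "(LINT x|M. Y x) = 0"
  shows "Var M (\<lambda>x. \<bar>X x + E\<bar>) \<le> 4 * Var M (\<lambda>x. \<bar>X x + Y x + E\<bar>)"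
proof -
  interpret prob_space M by (rule P)
  have iXY: "integrable M (\<lambda>x. X x * Y x)"
    by (rule Bochner_Integration.integrable_bound[where f="\<lambda>x. (X x)^2 + (Y x)^2"])
       (use iX2 iY2 abs_mult_le in auto)
  have iXa: "integrable M (\<lambda>x. (X x + a)^2)" for a
  proof -
    have "(\<lambda>x. (X x + a)^2) = (\<lambda>x. (X x)^2 + 2*a*X x + a^2)"
      by (simp add: fun_eq_iff power2_sum)
    then show ?thesis using iX iX2 by simp
  qed
  have iZ2: "integrable M (\<lambda>x. (X x + Y x + E)^2)"
  proof -
    have "(\<lambda>x. (X x + Y x + E)^2) = (\<lambda>x. (X x)^2 + (Y x)^2 + 2*(X x * Y x) + 2*E*X x + 2*E*Y x + E^2)"
      by (simp add: fun_eq_iff power2_eq_square algebra_simps)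
    then show ?thesis using iX iX2 iY iY2 iXY by simp
  qed
  have iZ: "integrable M (\<lambda>x. X x + Y x + E)" using iX iY by simp
  define c where "c = (LINT x|M. \<bar>X x + Y x + E\<bar>)"
  have c0: "0 \<le> c" unfolding c_def by simp
  have sqabs: "(\<bar>a\<bar> - c)^2 = a^2 - 2*c*\<bar>a\<bar> + c^2" for a :: real
    by (simp add: power2_diff)
  have iFy: "integrable M (\<lambda>x. (\<bar>X x + y + E\<bar> - c)^2)" for y
  proof -
    have "(\<lambda>x. (\<bar>X x + y + E\<bar> - c)^2) = (\<lambda>x. (X x + (y + E))^2 - 2*c*\<bar>X x + (y+E)\<bar> + c^2)"
      by (rule ext) (metis add.assoc sqabs)
    moreover have "integrable M (\<lambda>x. \<bar>X x + (y+E)\<bar>)" using iX by simp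
    ultimately show ?thesis using iXa[of "y+E"] by simp
  qed
  have iG: "integrable M (\<lambda>x. (\<bar>X x + Y x + E\<bar> - c)^2)"
  proof -
    have "(\<lambda>x. (\<bar>X x + Y x + E\<bar> - c)^2) = (\<lambda>x. (X x + Y x + E)^2 - 2*c*\<bar>X x + Y x + E\<bar> + c^2)"
      by (rule ext) (rule sqabs)
    moreover have "integrable M (\<lambda>x. \<bar>X x + Y x + E\<bar>)" using iZ by simp
    ultimately show ?thesis using iZ2 by simp
  qed
  have varZ: "Var M (\<lambda>x. \<bar>X x + Y x + E\<bar>) = (LINT x|M. (\<bar>X x + Y x + E\<bar> - c)^2)"
  proof -
    have "integrable M (\<lambda>x. \<bar>X x + Y x + E\<bar>^2)" using iZ2 by simp
    then show ?thesis using var_shift[OF P _ _, of "\<lambda>x. \<bar>X x + Y x + E\<bar>" c] iZ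
      by (simp add: c_def)
  qed
  have iT: "integrable M (\<lambda>x. \<bar>X x + E\<bar>)" using iX by simp
  have iT2: "integrable M (\<lambda>x. \<bar>X x + E\<bar>^2)" using iXa[of E] by simp
  define K where "K = Var M (\<lambda>x. \<bar>X x + E\<bar>)/4"
  have varT: "Var M (\<lambda>x. \<bar>X x + E\<bar>) \<le> (LINT x|M. (\<bar>X x + E\<bar> - d)^2)" for d
    using var_shift[OF P iT iT2, of d] by simp
  have varT0: "0 \<le> Var M (\<lambda>x. \<bar>X x + E\<bar>)"
  proof -
    have "0 \<le> (LINT x|M. (\<bar>X x + E\<bar> - (LINT x|M. \<bar>X x + E\<bar>))^2)" by simp
    then show ?thesis using var_shift[OF P iT iT2, of "LINT x|M. \<bar>X x + E\<bar>"] by simp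
  qed
  define PX where "PX = distr M borel X"
  define PY where "PY = distr M borel Y"
  interpret PX: prob_space PX unfolding PX_def by (rule prob_space_distr) simp
  interpret PY: prob_space PY unfolding PY_def by (rule prob_space_distr) simp
  interpret PXY: pair_prob_space PX PY ..
  have joint: "PX \<Otimes>\<^sub>M PY = distr M (borel \<Otimes>\<^sub>M borel) (\<lambda>x. (X x, Y x))"
    using ind unfolding PX_def PY_def indep_var_distribution_eq by simp
  define f where "f x y = (\<bar>x + y + E\<bar> - c)^2" for x y :: real
  have fm[measurable]: "(\<lambda>(x,y). f x y) \<in> borel_measurable (borel \<Otimes>\<^sub>M borel)"
    unfolding f_def by measurable
  have fm1[measurable]: "(\<lambda>x. f x y) \<in> borel_measurable borel" for y
    unfolding f_def by measurable
  have XYm: "(\<lambda>x. (X x, Y x)) \<in> M \<rightarrow>\<^sub>M borel \<Otimes>\<^sub>M borel" by measurable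
  have int_pair: "integrable (PX \<Otimes>\<^sub>M PY) (\<lambda>(x,y). f x y)"
    unfolding joint using integrable_distr_eq[OF XYm fm] iG by (simp add: f_def)
  have eq1: "(LINT x|M. (\<bar>X x + Y x + E\<bar> - c)^2) = integral\<^sup>L (PX \<Otimes>\<^sub>M PY) (\<lambda>(x,y). f x y)"
    unfolding joint using integral_distr[OF XYm fm] by (simp add: f_def)
  define F where "F y = (\<integral>x. f x y \<partial>PX)" for y
  have eq2: "(\<integral>y. F y \<partial>PY) = integral\<^sup>L (PX \<Otimes>\<^sub>M PY) (\<lambda>(x,y). f x y)"
    unfolding F_def by (rule PXY.integral_snd[OF int_pair])
  have intF: "integrable PY F"
    unfolding F_def by (rule PXY.integrable_snd[OF int_pair])
  have FM: "F y = (LINT x|M. (\<bar>X x + y + E\<bar> - c)^2)" for y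
    unfolding F_def PX_def using integral_distr[OF Xm fm1[of y]] by (simp add: f_def)
  have h0: "K \<le> F 0"
  proof -
    have "Var M (\<lambda>x. \<bar>X x + E\<bar>) \<le> F 0" using varT[of c] by (simp add: FM)
    then show ?thesis using varT0 by (simp add: K_def)
  qed
  have h2: "(u+w)*K \<le> w*F u + u*F (-w)" if u: "0 < u" and w: "0 < w" for u w
  proof -
    define d where "d = Dd u w c"
    have pt: "(\<bar>X x + E\<bar> - d)^2/4 \<le> (w*(\<bar>X x + u + E\<bar> - c)^2 + u*(\<bar>X x + -w + E\<bar> - c)^2)/(u+w)" for x
    proof -
      have "\<bar>X x + u + E\<bar> = \<bar>(X x + E) + u\<bar>" "\<bar>X x + -w + E\<bar> = \<bar>(X x + E) - w\<bar>"
        by (simp_all add: algebra_simps)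
      then show ?thesis using lemA'[OF u w c0, of "X x + E"] by (simp add: d_def)
    qed
    have "(LINT x|M. (\<bar>X x + E\<bar> - d)^2/4)
          \<le> (LINT x|M. (w*(\<bar>X x + u + E\<bar> - c)^2 + u*(\<bar>X x + -w + E\<bar> - c)^2)/(u+w))"
    proof (rule integral_mono)
      have "(\<lambda>x. (\<bar>X x + E\<bar> - d)^2) = (\<lambda>x. (X x + E)^2 - 2*d*\<bar>X x + E\<bar> + d^2)"
        by (simp add: fun_eq_iff power2_diff)
      then have "integrable M (\<lambda>x. (\<bar>X x + E\<bar> - d)^2)" using iXa[of E] iT by simp
      then show "integrable M (\<lambda>x. (\<bar>X x + E\<bar> - d)^2/4)" by simp
      show "integrable M (\<lambda>x. (w*(\<bar>X x + u + E\<bar> - c)^2 + u*(\<bar>X x + -w + E\<bar> - c)^2)/(u+w))"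
        using iFy[of u] iFy[of "-w"] by simp
    qed (rule pt)
    also have "\<dots> = (w*F u + u*F (-w))/(u+w)"
      using iFy[of u] iFy[of "-w"] by (simp add: FM)
    finally have "(LINT x|M. (\<bar>X x + E\<bar> - d)^2)/4 \<le> (w*F u + u*F (-w))/(u+w)" by simp
    then have "K \<le> (w*F u + u*F (-w))/(u+w)" using varT[of d] by (simp add: K_def)
    then show ?thesis using u w by (simp add: field_simps)
  qed
  obtain l where hl: "\<And>y. K + l*y \<le> F y" using supp[of K F, OF h0 h2] by blast
  have iPY: "integrable PY (\<lambda>y. y)" unfolding PY_def
    by (subst integrable_distr_eq[OF Ym]) (simp_all add: iY)
  have EPY: "(\<integral>y. y \<partial>PY) = 0" unfolding PY_def
    by (subst integral_distr[OF Ym]) (simp_all add: EY)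
  have iK: "integrable PY (\<lambda>y. K + l*y)" using iPY by simp
  have "(\<integral>y. K + l*y \<partial>PY) \<le> (\<integral>y. F y \<partial>PY)"
    by (rule integral_mono[OF iK intF]) (rule hl)
  moreover have "(\<integral>y. K + l*y \<partial>PY) = K + l * (\<integral>y. y \<partial>PY)"
    using iPY by (simp add: PY.prob_space)
  ultimately have "K \<le> (\<integral>y. F y \<partial>PY)" using EPY by simp
  then have "K \<le> Var M (\<lambda>x. \<bar>X x + Y x + E\<bar>)" using varZ eq1 eq2 by simp
  then show ?thesis by (simp add: K_def)
qed

theorem lemma7:
  fixes M :: "'a measure" and X Y :: "'a \<Rightarrow> real" and E :: real
  assumes "prob_space M"
    and "X \<in> borel_measurable M" and "Y \<in> borel_measurable M"
    and "prob_space.indep_var M borel X borel Y"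
    and "integrable M X" and "integrable M Y"
    and "integrable M (\<lambda>x. (X x)^2)" and "integrable M (\<lambda>x. (Y x)^2)"
    and "(LINT x|M. X x) = 0" and "(LINT x|M. Y x) = 0"
  shows "Var M (\<lambda>x. \<bar>X x + Y x + E\<bar>)
           \<ge> 1/4 * max (Var M (\<lambda>x. \<bar>X x + E\<bar>)) (Var M (\<lambda>x. \<bar>Y x + E\<bar>))"
proof -
  have a: "Var M (\<lambda>x. \<bar>X x + E\<bar>) \<le> 4 * Var M (\<lambda>x. \<bar>X x + Y x + E\<bar>)"
    using main[OF assms(1-8) assms(10)] .
  have ind': "prob_space.indep_var M borel Y borel X"
    using indep_var_sym[OF assms(1) assms(4)] .
  have "Var M (\<lambda>x. \<bar>Y x + E\<bar>) \<le> 4 * Var M (\<lambda>x. \<bar>Y x + X x + E\<bar>)"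
    using main[OF assms(1) assms(3) assms(2) ind' assms(6) assms(5) assms(8) assms(7) assms(9)] .
  moreover have "(\<lambda>x. \<bar>Y x + X x + E\<bar>) = (\<lambda>x. \<bar>X x + Y x + E\<bar>)" by (simp add: add.commute)
  ultimately have b: "Var M (\<lambda>x. \<bar>Y x + E\<bar>) \<le> 4 * Var M (\<lambda>x. \<bar>X x + Y x + E\<bar>)" by simp
  show ?thesis using a b by simp
qed

end
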